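(* A bidirectional graph $G$ is 2-rooted if and only if it contains a DEP-induced graph as a spanning subgraph.
   Context: Graphs $G=(V,E)$ are directed with $E\subseteq\{(i,k):i\ne k\}$. $G$ is bidirectional if $(i,j)\in E\Rightarrow(j,i)\in E$. A bidirectional path from $i_1$ to $i_k$ is a sequence of distinct vertices $i_1,\dots,i_k$ with $(i_l,i_{l+1}),(i_{l+1},i_l)\in E$ for all $l$. In a bidirectional graph, a vertex $i$ is 2-reachable from a set $U$ of at least two vertices if, after removing any single vertex other than $i$, there is a bidirectional path from some vertex of $U$ to $i$. $G$ is 2-rooted if there is a set of two vertices (roots) from which every other vertex is 2-reachable. A dual-entry path (DEP) with distinct entry vertices $i,j$ and $\ell\ge1$ inner vertices $v_1,\dots,v_\ell$ has vertex set $\{i,j,v_1,\dots,v_\ell\}$ and edge set $\{(i,v_1),(j,v_1)\}$ if $\ell=1$, and $\{(i,v_1),(j,v_\ell)\}\cup\{(v_r,v_{r+1}),(v_{r+1},v_r):1\le r<\ell\}$ if $\ell\ge2$. A DEP-induced graph $\mathcal L_\kappa$ ($\kappa\ge0$): $\mathcal L_0$ consists of two vertices and no edges; for $h=1,\dots,\kappa$, $\mathcal L_h$ is obtained from $\mathcal L_{h-1}$ by attaching a DEP whose two distinct entry vertices belong to $\mathcal L_{h-1}$ and whose inner vertices are new (taking unions of vertex and edge sets). A spanning subgraph of $G$ has vertex set $V$ and edge set contained in $E$. *)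

theory Defs
  imports Main
begin

definition digraph :: "'a set \<Rightarrow> ('a \<times> 'a) set \<Rightarrow> bool" where
  "digraph V E \<longleftrightarrow> E \<subseteq> {(i, k). i \<in> V \<and> k \<in> V \<and> i \<noteq> k}"

definition bidirectional :: "('a \<times> 'a) set \<Rightarrow> bool" where
  "bidirectional E \<longleftrightarrow> (\<forall>i j. (i, j) \<in> E \<longrightarrow> (j, i) \<in> E)"

definition bipath :: "'a set \<Rightarrow> ('a \<times> 'a) set \<Rightarrow> 'a list \<Rightarrow> bool" where
  "bipath V E p \<longleftrightarrow> p \<noteq> [] \<and> distinct p \<and> set p \<subseteq> V \<and>
     (\<forall>l. Suc l < length p \<longrightarrow> (p ! l, p ! Suc l) \<in> E \<and> (p ! Suc l, p ! l) \<in> E)"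

definition two_reachable :: "'a set \<Rightarrow> ('a \<times> 'a) set \<Rightarrow> 'a set \<Rightarrow> 'a \<Rightarrow> bool" where
  "two_reachable V E U i \<longleftrightarrow> card U \<ge> 2 \<and>
     (\<forall>w \<in> V. w \<noteq> i \<longrightarrow>
        (\<exists>p. bipath (V - {w}) {e \<in> E. fst e \<noteq> w \<and> snd e \<noteq> w} p \<and>
             hd p \<in> U \<and> last p = i))"

definition two_rooted :: "'a set \<Rightarrow> ('a \<times> 'a) set \<Rightarrow> bool" where
  "two_rooted V E \<longleftrightarrow> (\<exists>r1 r2. r1 \<in> V \<and> r2 \<in> V \<and> r1 \<noteq> r2 \<and>
     (\<forall>i \<in> V - {r1, r2}. two_reachable V E {r1, r2} i))"

text \<open>Edge set of a dual-entry path with entries i, j and inner vertices vs = [v_1,...,v_l].\<close>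
definition dep_edges :: "'a \<Rightarrow> 'a \<Rightarrow> 'a list \<Rightarrow> ('a \<times> 'a) set" where
  "dep_edges i j vs =
     (if length vs = 1 then {(i, vs ! 0), (j, vs ! 0)}
      else {(i, vs ! 0), (j, last vs)} \<union>
        {(vs ! r, vs ! Suc r) | r. Suc r < length vs} \<union>
        {(vs ! Suc r, vs ! r) | r. Suc r < length vs})"

inductive dep_induced :: "'a set \<Rightarrow> ('a \<times> 'a) set \<Rightarrow> bool" where
  base: "a \<noteq> b \<Longrightarrow> dep_induced {a, b} {}"
| step: "dep_induced V E \<Longrightarrow> i \<in> V \<Longrightarrow> j \<in> V \<Longrightarrow> i \<noteq> j \<Longrightarrow> vs \<noteq> [] \<Longrightarrow>
         distinct vs \<Longrightarrow> set vs \<inter> V = {} \<Longrightarrow>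
         dep_induced (V \<union> set vs) (E \<union> dep_edges i j vs)"

end

theory Submission
  imports Defs
begin

lemma bipath_iff:
  "bipath V E p \<longleftrightarrow> p \<noteq> [] \<and> distinct p \<and> set p \<subseteq> V \<and>
     successively (\<lambda>a b. (a,b) \<in> E \<and> (b,a) \<in> E) p"
  unfolding bipath_def successively_conv_nth by blast

definition sR :: "('a \<times> 'a) set \<Rightarrow> 'a \<Rightarrow> 'a \<Rightarrow> bool" where
  "sR F a b \<longleftrightarrow> (a,b) \<in> F \<or> (b,a) \<in> F"

lemma dep_succ:
  assumes "vs \<noteq> []" shows "successively (sR (dep_edges i j vs)) vs"
proof (cases "length vs = 1")
  case True
  then obtain x where "vs = [x]" by (cases vs) auto
  then show ?thesis by simp
next
  case False
  show ?thesis unfolding successively_conv_nth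
    using False by (auto simp: dep_edges_def sR_def)
qed

lemma dep_hd: "vs \<noteq> [] \<Longrightarrow> (i, hd vs) \<in> dep_edges i j vs"
  by (auto simp: dep_edges_def hd_conv_nth)

lemma dep_last: "vs \<noteq> [] \<Longrightarrow> (j, last vs) \<in> dep_edges i j vs"
  by (auto simp: dep_edges_def last_conv_nth)

lemma reach:
  assumes "dep_induced S F"
  shows "\<exists>r1 r2. r1 \<noteq> r2 \<and> r1 \<in> S \<and> r2 \<in> S \<and> (\<forall>w v. v \<in> S - {w} \<longrightarrow>
     (\<exists>p. p \<noteq> [] \<and> distinct p \<and> set p \<subseteq> S - {w} \<and> successively (sR F) p
          \<and> hd p \<in> {r1,r2} \<and> last p = v))"
  using assms
proof (induction rule: dep_induced.induct)
  case (base a b)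
  show ?case
  proof (rule exI[of _ a], rule exI[of _ b], intro conjI allI impI)
    fix w v assume "v \<in> {a, b} - {w}"
    then show "\<exists>p. p \<noteq> [] \<and> distinct p \<and> set p \<subseteq> {a, b} - {w} \<and> successively (sR {}) p
          \<and> hd p \<in> {a,b} \<and> last p = v"
      by (intro exI[of _ "[v]"]) auto
  qed (use base in auto)
next
  case (step S F i j vs)
  from step.IH obtain r1 r2 where r: "r1 \<noteq> r2" "r1 \<in> S" "r2 \<in> S" and
    P: "\<And>w v. v \<in> S - {w} \<Longrightarrow>
     (\<exists>p. p \<noteq> [] \<and> distinct p \<and> set p \<subseteq> S - {w} \<and> successively (sR F) p
          \<and> hd p \<in> {r1,r2} \<and> last p = v)" by blast
  let ?F = "F \<union> dep_edges i j vs"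
  have mono: "successively (sR ?F) p" if "successively (sR F) p" for p
    using that by (rule successively_mono) (auto simp: sR_def)
  have dmono: "successively (sR ?F) p" if "successively (sR (dep_edges i j vs)) p" for p
    using that by (rule successively_mono) (auto simp: sR_def)
  have svs: "successively (sR ?F) vs" using dep_succ[OF step.hyps(5)] by (rule dmono)
  have srev: "successively (sR ?F) (rev vs)"
  proof -
    have "successively (\<lambda>x y. sR ?F y x) vs" using svs
      by (rule successively_mono) (auto simp: sR_def)
    then show ?thesis by simp
  qed
  show ?case
  proof (rule exI[of _ r1], rule exI[of _ r2], intro conjI allI impI)
    fix w v assume v: "v \<in> S \<union> set vs - {w}"
    show "\<exists>p. p \<noteq> [] \<and> distinct p \<and> set p \<subseteq> S \<union> set vs - {w} \<and> successively (sR ?F) p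
          \<and> hd p \<in> {r1,r2} \<and> last p = v"
    proof (cases "v \<in> S")
      case True
      then obtain p where "p \<noteq> [] \<and> distinct p \<and> set p \<subseteq> S - {w} \<and> successively (sR F) p
          \<and> hd p \<in> {r1,r2} \<and> last p = v" using P v by blast
      then show ?thesis using mono by blast
    next
      case False
      then have "v \<in> set vs" using v by auto
      then obtain as bs where vs: "vs = as @ v # bs" by (meson split_list)
      have dis: "set as \<inter> set bs = {}" "v \<notin> set as" "v \<notin> set bs"
        using step.hyps(6) vs by auto
      have wv: "w \<noteq> v" using v by auto
      have "(w \<notin> set as \<and> w \<noteq> i) \<or> (w \<notin> set bs \<and> w \<noteq> j)"
        using dis step.hyps(2,3,4,7) vs by auto
      then show ?thesis
      proof
        assume w: "w \<notin> set as \<and> w \<noteq> i"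
        then have "i \<in> S - {w}" using step.hyps(2) by blast
        from P[OF this] obtain p where p: "p \<noteq> [] \<and> distinct p \<and> set p \<subseteq> S - {w} \<and> successively (sR F) p
          \<and> hd p \<in> {r1,r2} \<and> last p = i" by (elim exE) 
        have s1: "successively (sR ?F) (as @ [v])"
          using svs vs by (simp add: successively_append_iff)
        have e: "sR ?F (last p) (hd (as @ [v]))"
          using p dep_hd[OF step.hyps(5)] vs by (cases as) (simp_all add: sR_def)
        have succ: "successively (sR ?F) (p @ as @ [v])"
          using s1 e mono p by (simp add: successively_append_iff del: append_assoc)
        have sub: "set (as @ [v]) \<subseteq> set vs" using vs by auto
        have d1: "distinct (as @ [v])" using step.hyps(6) vs by simp
        have sp: "set p \<subseteq> S" "w \<notin> set p" using p by blast+
        have "set (as @ [v]) \<inter> set p = {}" using sub sp(1) step.hyps(7) by blast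
        then have dist: "distinct (p @ as @ [v])" using d1 p by (simp add: Int_commute)
        have "w \<notin> set (as @ [v])" using w wv by simp
        then have st: "set (p @ as @ [v]) \<subseteq> S \<union> set vs - {w}"
          using sp sub by auto
        show ?thesis
        proof (rule exI[of _ "p @ as @ [v]"], intro conjI)
        qed (use p succ dist st in \<open>simp_all add: hd_append\<close>)
      next
        assume w: "w \<notin> set bs \<and> w \<noteq> j"
        then have "j \<in> S - {w}" using step.hyps(3) by blast
        from P[OF this] obtain p where p: "p \<noteq> [] \<and> distinct p \<and> set p \<subseteq> S - {w} \<and> successively (sR F) p
          \<and> hd p \<in> {r1,r2} \<and> last p = j" by (elim exE) 
        have s1: "successively (sR ?F) (rev bs @ [v])"
          using srev vs by (simp add: successively_append_iff)
        have "hd (rev bs @ [v]) = last vs" using vs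
          by (cases "bs = []") (auto simp: hd_append hd_rev)
        then have e: "sR ?F (last p) (hd (rev bs @ [v]))"
          using p dep_last[OF step.hyps(5)] by (simp add: sR_def)
        have succ: "successively (sR ?F) (p @ rev bs @ [v])"
          using s1 e mono p by (simp add: successively_append_iff del: append_assoc)
        have sub: "set (rev bs @ [v]) \<subseteq> set vs" using vs by auto
        have d1: "distinct (rev bs @ [v])" using step.hyps(6) vs by simp
        have sp: "set p \<subseteq> S" "w \<notin> set p" using p by blast+
        have "set (rev bs @ [v]) \<inter> set p = {}" using sub sp(1) step.hyps(7) by blast
        then have dist: "distinct (p @ rev bs @ [v])" using d1 p by (simp add: Int_commute)
        have "w \<notin> set (rev bs @ [v])" using w wv by simp
        then have st: "set (p @ rev bs @ [v]) \<subseteq> S \<union> set vs - {w}"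
          using sp sub by auto
        show ?thesis
        proof (rule exI[of _ "p @ rev bs @ [v]"], intro conjI)
        qed (use p succ dist st in \<open>simp_all add: hd_append\<close>)
      qed
    qed
  qed (use r in auto)
qed

lemma ear:
  assumes dg: "digraph V E" and bd: "bidirectional E"
    and r: "r1 \<in> S" "r2 \<in> S" and SV: "S \<subseteq> V"
    and tr: "\<forall>i \<in> V - {r1,r2}. two_reachable V E {r1,r2} i"
    and u: "u \<in> V" "u \<notin> S"
  shows "\<exists>i j vs. i \<in> S \<and> j \<in> S \<and> i \<noteq> j \<and> vs \<noteq> [] \<and> distinct vs \<and>
           set vs \<subseteq> V - S \<and> dep_edges i j vs \<subseteq> E"
proof -
  have sym: "(b,a) \<in> E" if "(a,b) \<in> E" for a b using bd that unfolding bidirectional_def by blast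
  have EV: "a \<in> V \<and> b \<in> V \<and> a \<noteq> b" if "(a,b) \<in> E" for a b
    using dg that unfolding digraph_def by blast
  have "u \<in> V - {r1,r2}" using u r by blast
  then have "two_reachable V E {r1,r2} u" using tr by blast
  moreover have "r1 \<in> V" "r1 \<noteq> u" using r SV u by blast+
  ultimately obtain p where p: "bipath (V - {r1}) {e \<in> E. fst e \<noteq> r1 \<and> snd e \<noteq> r1} p"
    "hd p \<in> {r1,r2}" "last p = u"
    unfolding two_reachable_def by blast
  from p(1) have pne: "p \<noteq> []" and ps0: "successively (\<lambda>a b. (a,b) \<in> {e \<in> E. fst e \<noteq> r1 \<and> snd e \<noteq> r1}
     \<and> (b,a) \<in> {e \<in> E. fst e \<noteq> r1 \<and> snd e \<noteq> r1}) p"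
    unfolding bipath_iff by blast+
  have ps: "successively (\<lambda>a b. (a,b) \<in> E) p" using ps0 by (rule successively_mono) simp
  have "\<exists>y\<in>set p. y \<notin> S" using pne p(3) u(2) last_in_set by blast
  from split_list_first_prop[OF this] obtain ys x zs where
    pd: "p = ys @ x # zs" "x \<notin> S" "\<forall>y\<in>set ys. y \<in> S" by blast
  have yne: "ys \<noteq> []"
  proof
    assume "ys = []"
    then have "hd p = x" using pd by simp
    with p(2) r pd(2) show False by blast
  qed
  define s where "s = last ys"
  have sS: "s \<in> S" using yne pd(3) s_def last_in_set by blast
  have sx: "(s,x) \<in> E" using ps pd(1) yne s_def by (simp add: successively_append_iff)
  have xV: "x \<in> V" "s \<in> V" "s \<noteq> x" using EV[OF sx] by blast+
  have "x \<in> V - {r1,r2}" using xV pd(2) r by blast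
  then have "two_reachable V E {r1,r2} x" using tr by blast
  then obtain q where q: "bipath (V - {s}) {e \<in> E. fst e \<noteq> s \<and> snd e \<noteq> s} q"
    "hd q \<in> {r1,r2}" "last q = x"
    unfolding two_reachable_def using xV by blast
  from q(1) have qne: "q \<noteq> []" and qd: "distinct q" and qV: "set q \<subseteq> V - {s}"
    and qs0: "successively (\<lambda>a b. (a,b) \<in> {e \<in> E. fst e \<noteq> s \<and> snd e \<noteq> s}
     \<and> (b,a) \<in> {e \<in> E. fst e \<noteq> s \<and> snd e \<noteq> s}) q"
    unfolding bipath_iff by blast+
  have qs: "successively (\<lambda>a b. (a,b) \<in> E) q" using qs0 by (rule successively_mono) simp
  have "\<exists>y\<in>set q. y \<in> S" using qne q(2) r hd_in_set by blast
  from split_list_last_prop[OF this] obtain as s' bs where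
    qd2: "q = as @ s' # bs" "s' \<in> S" "\<forall>y\<in>set bs. y \<notin> S" by blast
  have bne: "bs \<noteq> []"
  proof
    assume "bs = []"
    then have "last q = s'" using qd2 by simp
    with q(3) qd2(2) pd(2) show False by simp
  qed
  have lbs: "last bs = x" using q(3) qd2(1) bne by simp
  have s's: "s' \<noteq> s" using qV qd2(1) by auto
  have sb: "successively (\<lambda>a b. (a,b) \<in> E) (s' # bs)" using qs qd2(1)
    by (simp add: successively_append_iff)
  have sbs: "successively (\<lambda>a b. (a,b) \<in> E) bs" using sb by (auto simp: successively_Cons)
  have dbs: "distinct bs" using qd qd2(1) by simp
  have bsV: "set bs \<subseteq> V - S" using qV qd2 by auto
  have "dep_edges s' s bs \<subseteq> E"
  proof (cases "length bs = 1")
    case True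
    then obtain b where b: "bs = [b]" by (cases bs) auto
    then have "b = x" using lbs by simp
    then show ?thesis using b sb sx unfolding dep_edges_def by simp
  next
    case False
    have 1: "(s', bs!0) \<in> E" using sb bne by (cases bs) auto
    have 2: "(s, last bs) \<in> E" using sx lbs by simp
    have 3: "(bs!r, bs!Suc r) \<in> E" if "Suc r < length bs" for r
      using successively_nth[OF sbs that] by simp
    show ?thesis using False 1 2 3 sym unfolding dep_edges_def by auto
  qed
  then show ?thesis using sS qd2(2) s's bne dbs bsV by blast
qed

lemma grow:
  assumes fin: "finite V" and dg: "digraph V E" and bd: "bidirectional E"
    and tr: "\<forall>i \<in> V - {r1,r2}. two_reachable V E {r1,r2} i"
  shows "dep_induced S F \<Longrightarrow> F \<subseteq> E \<Longrightarrow> S \<subseteq> V \<Longrightarrow> r1 \<in> S \<Longrightarrow> r2 \<in> S \<Longrightarrow>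
    \<exists>F' \<subseteq> E. dep_induced V F'"
proof (induction "card (V - S)" arbitrary: S F rule: less_induct)
  case less
  show ?case
  proof (cases "S = V")
    case True
    then show ?thesis using less.prems by blast
  next
    case False
    then obtain u where u: "u \<in> V" "u \<notin> S" using less.prems(3) by blast
    obtain i j vs where e: "i \<in> S" "j \<in> S" "i \<noteq> j" "vs \<noteq> []" "distinct vs"
      "set vs \<subseteq> V - S" "dep_edges i j vs \<subseteq> E"
      using ear[OF dg bd less.prems(4,5,3) tr u] by blast
    have dj: "set vs \<inter> S = {}" using e(6) by blast
    have di: "dep_induced (S \<union> set vs) (F \<union> dep_edges i j vs)"
      using dep_induced.step[OF less.prems(1) e(1-5) dj] .
    have "hd vs \<in> set vs" using e(4) by simp
    then have "V - (S \<union> set vs) \<subset> V - S" using e(6) by blast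
    moreover have "finite (V - S)" using fin by simp
    ultimately have lt: "card (V - (S \<union> set vs)) < card (V - S)" by (rule psubset_card_mono[rotated])
    have "F \<union> dep_edges i j vs \<subseteq> E" using less.prems(2) e(7) by blast
    moreover have "S \<union> set vs \<subseteq> V" using less.prems(3) e(6) by blast
    ultimately show ?thesis using less.hyps[OF lt di] less.prems(4,5) by blast
  qed
qed

theorem lemma1:
  fixes V :: "'a set" and E :: "('a \<times> 'a) set"
  assumes "finite V" and "digraph V E" and "bidirectional E"
  shows "two_rooted V E \<longleftrightarrow> (\<exists>E' \<subseteq> E. dep_induced V E')"
proof
  assume "two_rooted V E"
  then obtain r1 r2 where r: "r1 \<in> V" "r2 \<in> V" "r1 \<noteq> r2"
    and tr: "\<forall>i \<in> V - {r1,r2}. two_reachable V E {r1,r2} i"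
    unfolding two_rooted_def by blast
  have "dep_induced {r1,r2} {}" using r(3) by (rule dep_induced.base)
  from grow[OF assms tr this] show "\<exists>E' \<subseteq> E. dep_induced V E'" using r by blast
next
  assume "\<exists>E' \<subseteq> E. dep_induced V E'"
  then obtain E' where E': "E' \<subseteq> E" "dep_induced V E'" by blast
  from reach[OF E'(2)] obtain r1 r2 where r: "r1 \<noteq> r2" "r1 \<in> V" "r2 \<in> V" and
    P: "\<And>w v. v \<in> V - {w} \<Longrightarrow>
     (\<exists>p. p \<noteq> [] \<and> distinct p \<and> set p \<subseteq> V - {w} \<and> successively (sR E') p
          \<and> hd p \<in> {r1,r2} \<and> last p = v)" by blast
  have sym: "(b,a) \<in> E" if "(a,b) \<in> E" for a b using assms(3) that unfolding bidirectional_def by blast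
  show "two_rooted V E" unfolding two_rooted_def
  proof (rule exI[of _ r1], rule exI[of _ r2], intro conjI ballI)
    fix i assume i: "i \<in> V - {r1,r2}"
    show "two_reachable V E {r1,r2} i" unfolding two_reachable_def
    proof (intro conjI ballI impI)
      show "2 \<le> card {r1,r2}" using r by simp
      fix w assume w: "w \<in> V" "w \<noteq> i"
      then have "i \<in> V - {w}" using i by blast
      from P[OF this] obtain p where p: "p \<noteq> []" "distinct p" "set p \<subseteq> V - {w}"
        "successively (sR E') p" "hd p \<in> {r1,r2}" "last p = i" by blast
      have "successively (\<lambda>a b. (a,b) \<in> {e \<in> E. fst e \<noteq> w \<and> snd e \<noteq> w}
           \<and> (b,a) \<in> {e \<in> E. fst e \<noteq> w \<and> snd e \<noteq> w}) p"
        using p(4)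
      proof (rule successively_mono)
        fix x y assume xy: "x \<in> set p" "y \<in> set p" "sR E' x y"
        have "x \<noteq> w" "y \<noteq> w" using xy(1,2) p(3) by blast+
        moreover have "(x,y) \<in> E" "(y,x) \<in> E" using xy(3) E'(1) sym unfolding sR_def by blast+
        ultimately show "(x,y) \<in> {e \<in> E. fst e \<noteq> w \<and> snd e \<noteq> w}
           \<and> (y,x) \<in> {e \<in> E. fst e \<noteq> w \<and> snd e \<noteq> w}" by simp
      qed
      then have "bipath (V - {w}) {e \<in> E. fst e \<noteq> w \<and> snd e \<noteq> w} p"
        unfolding bipath_iff using p(1-3) by blast
      then show "\<exists>p. bipath (V - {w}) {e \<in> E. fst e \<noteq> w \<and> snd e \<noteq> w} p \<and>
             hd p \<in> {r1,r2} \<and> last p = i" using p(5,6) by blast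
    qed
  qed (use r in auto)
qed

end
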